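(* Consider the Gaussian partial interference multiple access channel (PIMAC) with real channel coefficients $h_{12},h_{22},h_{31}$ and transmit power constraints $P_1,P_2,P_3>0$. Define the SD-TIN sum-rate $$R_\Sigma^{SD\text{-}TIN}=\frac{1}{2}\log\left(1+\frac{P_1+P_2}{1+h_{31}^2P_3}\right)+\frac{1}{2}\log\left(1+\frac{P_3}{1+h_{12}^2P_1+h_{22}^2P_2}\right)$$ and the TDMA-TIN sum-rate $R_\Sigma^{TDMA\text{-}TIN}=\max_{\alpha\in[0,1]}\big(A(\alpha)+B(\alpha)\big)$, where $$A(\alpha)=\frac{\alpha}{2}\log\left(1+\frac{P_1/\alpha}{1+h_{31}^2P_3}\right)+\frac{1-\alpha}{2}\log\left(1+\frac{P_2/(1-\alpha)}{1+h_{31}^2P_3}\right),$$ $$B(\alpha)=\frac{\alpha}{2}\log\left(1+\frac{P_3}{1+h_{12}^2P_1/\alpha}\right)+\frac{1-\alpha}{2}\log\left(1+\frac{P_3}{1+h_{22}^2P_2/(1-\alpha)}\right)$$ (with the terms at $\alpha=0$ and $\alpha=1$ understood as their limits). Then $R_\Sigma^{TDMA\text{-}TIN}\geq R_\Sigma^{SD\text{-}TIN}$; moreover, already the choice $\alpha=\alpha^*=\frac{P_1}{P_1+P_2}$ gives $A(\alpha^* )+B(\alpha^* )\ge R_\Sigma^{SD\text{-}TIN}$, and if $h_{12}^2\neq h_{22}^2$ then $A(\alpha^* )+B(\alpha^* )> R_\Sigma^{SD\text{-}TIN}$, so in particular $R_\Sigma^{TDMA\text{-}TIN}> R_\Sig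ma^{SD\text{-}TIN}$.
   Context: The PIMAC has received signals $Y_1=X_1+X_2+h_{31}X_3+Z_1$ and $Y_2=h_{12}X_1+h_{22}X_2+X_3+Z_2$, where $Z_1,Z_2\sim\mathcal{N}(0,1)$ are i.i.d. noise, receiver 1 wants the messages of transmitters 1 and 2, receiver 2 wants the message of transmitter 3, and transmitter $i$ has average power constraint $P_i$. $R_\Sigma^{SD\text{-}TIN}$ is the sum-rate achieved with Gaussian codes at full power, successive decoding at receiver 1 treating $X_3$ as noise, and receiver 2 treating $X_1,X_2$ as noise; $R_\Sigma^{TDMA\text{-}TIN}$ is the sum-rate when users 1 and 2 time-share (fractions $\alpha$, $1-\alpha$, with powers $P_1/\alpha$, $P_2/(1-\alpha)$) and all receivers treat interference as noise. Logarithms are base 2. *)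

theory Defs
  imports Complex_Main
begin

text \<open>Time-sharing TIN term for a user with fraction a and (average) power P, facing
  noise-plus-interference N:  (a/2) log2 (1 + (P/a)/N); at a = 0 it is its limit, 0.\<close>
definition ts_term :: "real \<Rightarrow> real \<Rightarrow> real \<Rightarrow> real" where
  "ts_term a P N = (if a = 0 then 0 else a / 2 * log 2 (1 + (P / a) / N))"

definition ts_int_term :: "real \<Rightarrow> real \<Rightarrow> real \<Rightarrow> real \<Rightarrow> real" where
  "ts_int_term a P3 g P = (if a = 0 then 0 else a / 2 * log 2 (1 + P3 / (1 + g * P / a)))"

definition R_SD_TIN :: "real \<Rightarrow> real \<Rightarrow> real \<Rightarrow> real \<Rightarrow> real \<Rightarrow> real \<Rightarrow> real" where
  "R_SD_TIN h12 h22 h31 P1 P2 P3 =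
     1/2 * log 2 (1 + (P1 + P2) / (1 + h31^2 * P3))
   + 1/2 * log 2 (1 + P3 / (1 + h12^2 * P1 + h22^2 * P2))"

definition A_TDMA :: "real \<Rightarrow> real \<Rightarrow> real \<Rightarrow> real \<Rightarrow> real \<Rightarrow> real" where
  "A_TDMA h31 P1 P2 P3 \<alpha> =
     ts_term \<alpha> P1 (1 + h31^2 * P3) + ts_term (1 - \<alpha>) P2 (1 + h31^2 * P3)"

definition B_TDMA :: "real \<Rightarrow> real \<Rightarrow> real \<Rightarrow> real \<Rightarrow> real \<Rightarrow> real \<Rightarrow> real" where
  "B_TDMA h12 h22 P1 P2 P3 \<alpha> =
     ts_int_term \<alpha> P3 (h12^2) P1 + ts_int_term (1 - \<alpha>) P3 (h22^2) P2"

definition R_TDMA_TIN :: "real \<Rightarrow> real \<Rightarrow> real \<Rightarrow> real \<Rightarrow> real \<Rightarrow> real \<Rightarrow> real" where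
  "R_TDMA_TIN h12 h22 h31 P1 P2 P3 =
     (SUP \<alpha>\<in>{0..1}. A_TDMA h31 P1 P2 P3 \<alpha> + B_TDMA h12 h22 P1 P2 P3 \<alpha>)"

end

theory Submission imports Defs begin

lemma tangent:
  fixes c x m :: real
  assumes c: "c > 0" and x: "x \<ge> 0" and m: "m \<ge> 0"
  defines "F \<equiv> \<lambda>t. ln (1+c+t) - ln (1+t) - (1/(1+c+m) - 1/(1+m)) * (t - m)"
  shows "F x \<ge> F m" and "x \<noteq> m \<Longrightarrow> F x > F m"
proof -
  have der: "\<And>t. t \<ge> 0 \<Longrightarrow> DERIV F t :> (1/(1+c+t) - 1/(1+t)) - (1/(1+c+m) - 1/(1+m))"
  proof -
    fix t :: real assume t: "t \<ge> 0"
    have d1: "((\<lambda>z. ln (1+c+z)) has_real_derivative inverse (1+c+t)) (at t)"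
      using c t by (auto intro!: derivative_eq_intros simp: divide_inverse)
    have d2: "((\<lambda>z. ln (1+z)) has_real_derivative inverse (1+t)) (at t)"
      using c t by (auto intro!: derivative_eq_intros simp: divide_inverse)
    have d3: "((\<lambda>z. (1/(1+c+m) - 1/(1+m)) * (z - m)) has_real_derivative (1/(1+c+m) - 1/(1+m))) (at t)"
      by (auto intro!: derivative_eq_intros)
    have "((\<lambda>t. ln (1+c+t) - ln (1+t) - (1/(1+c+m) - 1/(1+m)) * (t - m)) has_real_derivative
       (inverse (1+c+t) - inverse (1+t) - (1/(1+c+m) - 1/(1+m)))) (at t)"
      by (intro DERIV_diff d1 d2 d3)
    then show "DERIV F t :> (1/(1+c+t) - 1/(1+t)) - (1/(1+c+m) - 1/(1+m))"
      unfolding F_def by (simp add: divide_inverse)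
  qed
  have mono: "(1/(1+c+t) - 1/(1+t)) - (1/(1+c+m) - 1/(1+m)) > 0" if "t > m" for t
  proof -
    have "1/(1+t) - 1/(1+c+t) = c/((1+t)*(1+c+t))" using that m c by (simp add: field_simps)
    moreover have "1/(1+m) - 1/(1+c+m) = c/((1+m)*(1+c+m))" using that m c by (simp add: field_simps)
    moreover have "c/((1+t)*(1+c+t)) < c/((1+m)*(1+c+m))"
      using that m c by (intro divide_strict_left_mono mult_strict_mono) auto
    ultimately show ?thesis by linarith
  qed
  have mono2: "(1/(1+c+t) - 1/(1+t)) - (1/(1+c+m) - 1/(1+m)) < 0" if "t < m" "t \<ge> 0" for t
  proof -
    have "1/(1+t) - 1/(1+c+t) = c/((1+t)*(1+c+t))" using that m c by (simp add: field_simps)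
    moreover have "1/(1+m) - 1/(1+c+m) = c/((1+m)*(1+c+m))" using that m c by (simp add: field_simps)
    moreover have "c/((1+t)*(1+c+t)) > c/((1+m)*(1+c+m))"
      using that m c by (intro divide_strict_left_mono mult_strict_mono) auto
    ultimately show ?thesis by linarith
  qed
  have strict: "F x > F m" if "x \<noteq> m"
  proof (cases "x > m")
    case True
    obtain z where z: "z > m" "z < x" "F x - F m = (x - m) * ((1/(1+c+z) - 1/(1+z)) - (1/(1+c+m) - 1/(1+m)))"
      using MVT2[OF True, of F "\<lambda>t. (1/(1+c+t) - 1/(1+t)) - (1/(1+c+m) - 1/(1+m))"] der m by force
    have "(x - m) * ((1/(1+c+z) - 1/(1+z)) - (1/(1+c+m) - 1/(1+m))) > 0"
      using mono[of z] z True by (simp add: mult_pos_pos)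
    then show ?thesis using z by linarith
  next
    case False
    hence xm: "x < m" using that by simp
    obtain z where z: "z > x" "z < m" "F m - F x = (m - x) * ((1/(1+c+z) - 1/(1+z)) - (1/(1+c+m) - 1/(1+m)))"
      using MVT2[OF xm, of F "\<lambda>t. (1/(1+c+t) - 1/(1+t)) - (1/(1+c+m) - 1/(1+m))"] der x by force
    have "(m - x) * ((1/(1+c+z) - 1/(1+z)) - (1/(1+c+m) - 1/(1+m))) < 0"
      using mono2[of z] z x xm by (simp add: mult_pos_neg)
    then show ?thesis using z by linarith
  qed
  show "x \<noteq> m \<Longrightarrow> F x > F m" by (rule strict)
  show "F x \<ge> F m" using strict by (cases "x = m") auto
qed

lemma log_conv:
  fixes c x :: real assumes "c > 0" "x \<ge> 0"
  shows "log 2 (1 + c/(1+x)) = (ln (1+c+x) - ln (1+x)) / ln 2"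
proof -
  have "1 + c/(1+x) = (1+c+x)/(1+x)" using assms by (simp add: field_simps)
  then show ?thesis using assms by (simp add: log_def ln_div)
qed

lemma jensen:
  fixes a c x1 x2 :: real
  assumes a: "0 < a" "a < 1" and c: "c > 0" and x: "x1 \<ge> 0" "x2 \<ge> 0"
  shows "a * log 2 (1 + c/(1+x1)) + (1-a) * log 2 (1 + c/(1+x2)) \<ge> log 2 (1 + c/(1+(a*x1+(1-a)*x2)))"
    and "x1 \<noteq> x2 \<Longrightarrow> a * log 2 (1 + c/(1+x1)) + (1-a) * log 2 (1 + c/(1+x2)) > log 2 (1 + c/(1+(a*x1+(1-a)*x2)))"
proof -
  define m where "m = a*x1+(1-a)*x2"
  have m: "m \<ge> 0" unfolding m_def using a x by simp
  define G where "G = (\<lambda>t. ln (1+c+t) - ln (1+t))"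
  define D where "D = 1/(1+c+m) - 1/(1+m)"
  have t1: "G x1 - D*(x1-m) \<ge> G m" using tangent(1)[OF c x(1) m] unfolding G_def D_def by simp
  have t2: "G x2 - D*(x2-m) \<ge> G m" using tangent(1)[OF c x(2) m] unfolding G_def D_def by simp
  have lin: "a*(x1-m) + (1-a)*(x2-m) = 0" unfolding m_def by (simp add: algebra_simps)
  have eq: "a*G x1 + (1-a)*G x2 - G m = a*(G x1 - D*(x1-m) - G m) + (1-a)*(G x2 - D*(x2-m) - G m)"
    using lin by (simp add: algebra_simps) (metis (no_types, opaque_lifting) distrib_left mult.commute mult_zero_right)
  have L: "a * log 2 (1 + c/(1+x1)) + (1-a) * log 2 (1 + c/(1+x2)) = (a*G x1 + (1-a)*G x2) / ln 2"
    unfolding log_conv[OF c x(1)] log_conv[OF c x(2)] G_def by (simp add: add_divide_distrib)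
  have R: "log 2 (1 + c/(1+(a*x1+(1-a)*x2))) = G m / ln 2"
    using log_conv[OF c m] unfolding G_def m_def by simp
  have "a*(G x1 - D*(x1-m) - G m) \<ge> 0" using t1 a by simp
  moreover have "(1-a)*(G x2 - D*(x2-m) - G m) \<ge> 0" using t2 a by simp
  ultimately have ge: "a*G x1 + (1-a)*G x2 \<ge> G m" using eq by linarith
  show "a * log 2 (1 + c/(1+x1)) + (1-a) * log 2 (1 + c/(1+x2)) \<ge> log 2 (1 + c/(1+(a*x1+(1-a)*x2)))"
    unfolding L R using ge by (simp add: divide_right_mono)
  assume ne: "x1 \<noteq> x2"
  have "x1 \<noteq> m"
  proof
    assume "x1 = m"
    hence "(1-a)*(x2-x1) = 0" unfolding m_def by (simp add: algebra_simps)
    thus False using a ne by simp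
  qed
  hence "G x1 - D*(x1-m) > G m" using tangent(2)[OF c x(1) m] unfolding G_def D_def by simp
  hence "a*(G x1 - D*(x1-m) - G m) > 0" using a by simp
  moreover have "(1-a)*(G x2 - D*(x2-m) - G m) \<ge> 0" using t2 a by simp
  ultimately have gt: "a*G x1 + (1-a)*G x2 > G m" using eq by linarith
  show "a * log 2 (1 + c/(1+x1)) + (1-a) * log 2 (1 + c/(1+x2)) > log 2 (1 + c/(1+(a*x1+(1-a)*x2)))"
    unfolding L R using gt by (simp add: divide_strict_right_mono)
qed

lemma ts_term_bound:
  fixes a P N :: real assumes "0 \<le> a" "P > 0" "N \<ge> 1"
  shows "ts_term a P N \<le> P / ln 2"
proof (cases "a = 0")
  case True thus ?thesis using assms by (simp add: ts_term_def)
next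
  case False
  hence a: "a > 0" using assms by simp
  have y: "P / a / N \<ge> 0" using a assms by simp
  have "ln (1 + P/a/N) \<le> P/a/N" using y by (intro ln_add_one_self_le_self) 
  hence "a/2 * ln (1 + P/a/N) \<le> a/2 * (P/a/N)" using a by (intro mult_left_mono) auto
  also have "... = P/(2*N)" using a assms by (simp add: field_simps)
  also have "... \<le> P" using assms by (simp add: field_simps)
  finally have "a/2 * ln (1 + P/a/N) \<le> P" .
  hence "a/2 * ln (1 + P/a/N) / ln 2 \<le> P / ln 2" by (rule divide_right_mono) simp
  thus ?thesis using False by (simp add: ts_term_def log_def)
qed

lemma ts_int_term_bound:
  fixes a P3 g P :: real assumes "0 \<le> a" "a \<le> 1" "P3 > 0" "g \<ge> 0" "P > 0"
  shows "ts_int_term a P3 g P \<le> P3 / ln 2"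
proof (cases "a = 0")
  case True thus ?thesis using assms by (simp add: ts_int_term_def)
next
  case False
  hence a: "a > 0" using assms by simp
  have "g*P/a \<ge> 0" using a assms by (intro divide_nonneg_pos mult_nonneg_nonneg) auto
  hence d: "1 + g*P/a \<ge> 1" by linarith
  have y: "P3 / (1 + g*P/a) \<ge> 0" using d assms by (intro divide_nonneg_nonneg) auto
  have l1: "ln (1 + P3 / (1 + g*P/a)) \<le> P3 / (1 + g*P/a)" using y by (intro ln_add_one_self_le_self)
  have d': "0 < 1 + g*P/a" using d by linarith
  have l2: "P3 / (1 + g*P/a) \<le> P3/1" by (rule divide_left_mono) (use d d' assms(3) in auto)
  have l: "ln (1 + P3 / (1 + g*P/a)) \<le> P3" using l1 l2 by simp
  have "a/2 * ln (1 + P3 / (1 + g*P/a)) \<le> 1 * P3"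
    using l assms a y by (intro mult_mono) (auto intro!: ln_ge_zero)
  hence "a/2 * ln (1 + P3 / (1 + g*P/a)) \<le> P3" by simp
  hence "a/2 * ln (1 + P3 / (1 + g*P/a)) / ln 2 \<le> P3 / ln 2" by (rule divide_right_mono) simp
  thus ?thesis using False by (simp add: ts_int_term_def log_def)
qed

theorem mainTheorem1:
  fixes h12 h22 h31 P1 P2 P3 :: real
  assumes "P1 > 0" and "P2 > 0" and "P3 > 0"
  defines "\<alpha>s \<equiv> P1 / (P1 + P2)"
  shows "R_TDMA_TIN h12 h22 h31 P1 P2 P3 \<ge> R_SD_TIN h12 h22 h31 P1 P2 P3
       \<and> A_TDMA h31 P1 P2 P3 \<alpha>s + B_TDMA h12 h22 P1 P2 P3 \<alpha>s \<ge> R_SD_TIN h12 h22 h31 P1 P2 P3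
       \<and> (h12^2 \<noteq> h22^2 \<longrightarrow>
            A_TDMA h31 P1 P2 P3 \<alpha>s + B_TDMA h12 h22 P1 P2 P3 \<alpha>s > R_SD_TIN h12 h22 h31 P1 P2 P3
          \<and> R_TDMA_TIN h12 h22 h31 P1 P2 P3 > R_SD_TIN h12 h22 h31 P1 P2 P3)"
proof -
  note P = assms(1-3)
  define S where "S = P1 + P2"
  define N where "N = 1 + h31^2 * P3"
  have S: "S > 0" unfolding S_def using P by simp
  have N: "N \<ge> 1" unfolding N_def using P by simp
  have a0: "0 < \<alpha>s" and a1: "\<alpha>s < 1" unfolding \<alpha>s_def using P by (auto simp: field_simps)
  have a1': "1 - \<alpha>s = P2 / S" unfolding \<alpha>s_def S_def using P by (simp add: field_simps)
  have aS: "\<alpha>s = P1 / S" unfolding \<alpha>s_def S_def by simp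
  have q1: "P1 / \<alpha>s = S" unfolding aS using P S by simp
  have q2: "P2 / (1 - \<alpha>s) = S" unfolding a1' using P S by simp
  have A: "A_TDMA h31 P1 P2 P3 \<alpha>s = 1/2 * log 2 (1 + S / N)"
    unfolding A_TDMA_def ts_term_def N_def[symmetric] using a0 a1 q1 q2
    apply simp by (simp add: field_simps)
  have q3: "h12^2 * P1 / \<alpha>s = \<alpha>s * 0 + h12^2 * S" using q1 by (simp add: mult.assoc[symmetric] times_divide_eq_right[symmetric])
  have q4: "h22^2 * P2 / (1 - \<alpha>s) = h22^2 * S" using q2 by (simp add: mult.assoc[symmetric] times_divide_eq_right[symmetric])
  have B: "B_TDMA h12 h22 P1 P2 P3 \<alpha>s = 1/2 * (\<alpha>s * log 2 (1 + P3/(1 + h12^2*S)) + (1-\<alpha>s) * log 2 (1 + P3/(1 + h22^2*S)))"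
    unfolding B_TDMA_def ts_int_term_def using a0 a1 q3 q4 apply (simp add: algebra_simps) by (simp add: field_simps)
  have sd: "1 + h12^2 * P1 + h22^2 * P2 = 1 + (\<alpha>s * (h12^2*S) + (1-\<alpha>s)*(h22^2*S))"
  proof -
    have e1: "\<alpha>s*S = P1" unfolding aS using S by auto
    have e2: "(1-\<alpha>s)*S = P2" unfolding a1' using S by auto
    have "\<alpha>s * (h12^2*S) + (1-\<alpha>s)*(h22^2*S) = h12^2*(\<alpha>s*S) + h22^2*((1-\<alpha>s)*S)" by (simp add: algebra_simps)
    thus ?thesis unfolding e1 e2 by simp
  qed
  have R: "R_SD_TIN h12 h22 h31 P1 P2 P3 = 1/2 * log 2 (1 + S / N) + 1/2 * log 2 (1 + P3/(1 + (\<alpha>s * (h12^2*S) + (1-\<alpha>s)*(h22^2*S))))"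
    unfolding R_SD_TIN_def sd N_def S_def ..
  have x1: "h12^2 * S \<ge> 0" and x2: "h22^2*S \<ge> 0" using S by auto
  note J = jensen[OF a0 a1 P(3) x1 x2]
  have ge: "A_TDMA h31 P1 P2 P3 \<alpha>s + B_TDMA h12 h22 P1 P2 P3 \<alpha>s \<ge> R_SD_TIN h12 h22 h31 P1 P2 P3"
    unfolding A B R using J(1) by simp
  have gt: "A_TDMA h31 P1 P2 P3 \<alpha>s + B_TDMA h12 h22 P1 P2 P3 \<alpha>s > R_SD_TIN h12 h22 h31 P1 P2 P3"
    if "h12^2 \<noteq> h22^2"
  proof -
    have "h12^2 * S \<noteq> h22^2 * S" using that S by simp
    hence j: "\<alpha>s * log 2 (1 + P3/(1+h12^2*S)) + (1-\<alpha>s) * log 2 (1 + P3/(1+h22^2*S)) > log 2 (1 + P3/(1+(\<alpha>s*(h12^2*S)+(1-\<alpha>s)*(h22^2*S))))"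
      by (rule J(2))
    show ?thesis unfolding A B R using j by simp
  qed
  have bdd: "bdd_above ((\<lambda>\<alpha>. A_TDMA h31 P1 P2 P3 \<alpha> + B_TDMA h12 h22 P1 P2 P3 \<alpha>) ` {0..1})"
  proof (rule bdd_aboveI2)
    fix \<alpha> :: real assume "\<alpha> \<in> {0..1}"
    hence a: "0 \<le> \<alpha>" "\<alpha> \<le> 1" by auto
    have N1: "1 + h31^2 * P3 \<ge> 1" using P by simp
    have g: "h12^2 \<ge> 0" "h22^2 \<ge> 0" by auto
    have b1: "ts_term \<alpha> P1 (1 + h31^2 * P3) \<le> P1/ln 2" by (rule ts_term_bound) (use a P N1 in auto)
    have b2: "ts_term (1-\<alpha>) P2 (1 + h31^2 * P3) \<le> P2/ln 2" by (rule ts_term_bound) (use a P N1 in auto)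
    have b3: "ts_int_term \<alpha> P3 (h12^2) P1 \<le> P3/ln 2" by (rule ts_int_term_bound) (use a P g in auto)
    have b4: "ts_int_term (1-\<alpha>) P3 (h22^2) P2 \<le> P3/ln 2" by (rule ts_int_term_bound) (use a P g in auto)
    show "A_TDMA h31 P1 P2 P3 \<alpha> + B_TDMA h12 h22 P1 P2 P3 \<alpha> \<le> P1/ln 2 + P2/ln 2 + P3/ln 2 + P3/ln 2"
      unfolding A_TDMA_def B_TDMA_def
      using b1 b2 b3 b4 by linarith
  qed
  have as_in: "\<alpha>s \<in> {0..1}" using a0 a1 by simp
  have sup: "R_TDMA_TIN h12 h22 h31 P1 P2 P3 \<ge> A_TDMA h31 P1 P2 P3 \<alpha>s + B_TDMA h12 h22 P1 P2 P3 \<alpha>s"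
    unfolding R_TDMA_TIN_def by (rule cSUP_upper[OF as_in bdd])
  show ?thesis using ge gt sup by auto
qed

end
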